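(* In the mixture setting, let $W$ be any measurable real-valued function on the space of component parameters. For $\theta$ with components $(\xi_1,\dots,\xi_G)$ let $\rho_\theta$ be the permutation that sorts the components by $W$ in nondecreasing order (ties broken by the original index), so that $P_{\rho_\theta}(\theta)$ has $W$-values nondecreasing in the component index. For each permutation $\sigma$ of $\{1,\dots,G\}$ define the ordering map $\psi_\sigma(\theta)=P_{\sigma}(P_{\rho_\theta}(\theta))$, so that the components $\xi'_1,\dots,\xi'_G$ of $\psi_\sigma(\theta)$ satisfy $W(\xi'_{\sigma^{-1}(1)})\le\dots\le W(\xi'_{\sigma^{-1}(G)})$. Let $E=E_{\hat\theta,\hat\Sigma,c}$ and $B=B_{\hat\theta,\hat\Sigma,c,\alpha}\subseteq E$. Define the $G\times G$ matrix $\Delta$ by $\Delta_{g_1,g_2}=1$ if $W(\xi_{g_1})<W(\xi_{g_2})$ for every $\theta\in E$, and $\Delta_{g_1,g_2}=0$ otherwise; let $\Omega$ be the set of permutations $\sigma$ such that the sequence $(\sigma^{-1}(1),\dots,\sigma^{-1}(G))$ is a topological ordering of the directed graph with adjacency matrix $\Delta$ (i.e. $g_1$ appears before $g_2$ whenever $\Delta_{g_1,g_2}=1$). Then for every sample $\theta^{(T/2+1)\star},\dots,\theta^{(T)\star}$, $$\frac{1}{G!}\sum_{\sigma}\frac{1}{T/2}\sum_{\substack{t=T/2+1\\P_\sigma(\theta^{(t)\star})\in B}}^T\frac{1/V(B)}{\pi(\theta^{(t)\star})L(\theta^{(t)\star})}=\frac{1}{G!}\sum_{\sigma\in\Omega}\frac{1}{T/2}\sum_{\substack{t=T/2+1\\\psi_\sigma(\theta^{(t)\star})\in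 B}}^T\frac{1/V(B)}{\pi(\theta^{(t)\star})L(\theta^{(t)\star})},$$ where the left-hand sum is over all $G!$ permutations.
   Context: Mixture model with parameter $\theta=(\xi_1,\dots,\xi_G,\tau_1,\dots,\tau_{G-1})\in\mathbb{R}^R$, prior $\pi$, likelihood $L$. For a permutation $\sigma$ of $\{1,\dots,G\}$, $P_\sigma$ is the relabelling map sending $\theta$ to the parameter with components $(\xi_{\sigma(1)},\dots,\xi_{\sigma(G)})$ and proportions $(\tau_{\sigma(1)},\dots,\tau_{\sigma(G)})$, $\tau_G=1-\sum_{g<G}\tau_g$. $E_{\hat\theta,\hat\Sigma,c}=\{\theta:(\theta-\hat\theta)^\top\hat\Sigma^{-1}(\theta-\hat\theta)<c^2\}$ for a vector $\hat\theta$, positive definite $\hat\Sigma$ and $c>0$; $B_{\hat\theta,\hat\Sigma,c,\alpha}=E_{\hat\theta,\hat\Sigma,c}\cap\{\theta:\pi(\theta)L(\theta)>\hat q_\alpha\}$ for a threshold $\hat q_\alpha>0$, with $0<V(B)<\infty$. In the paper $W$ is built from quadratic discriminant analysis, but any measurable $W$ is allowed. *)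

theory Defs
  imports "HOL-Analysis.Analysis"
begin

text \<open>A fixed coordinate layout:
  cx g k is the coordinate of the k-th entry of component xi_g (g in 1..G),
  ct g is the coordinate of the proportion tau_g (g in 1..G-1).\<close>

definition layout :: "nat \<Rightarrow> (nat \<Rightarrow> 'd::finite \<Rightarrow> 'r::finite) \<Rightarrow> (nat \<Rightarrow> 'r) \<Rightarrow> bool" where
  "layout G cx ct \<longleftrightarrow>
     inj_on (\<lambda>(g,k). cx g k) ({1..G} \<times> UNIV) \<and> inj_on ct {1..<G} \<and>
     (\<forall>g\<in>{1..G}. \<forall>k. \<forall>h\<in>{1..<G}. cx g k \<noteq> ct h) \<and>
     (\<forall>i. (\<exists>g\<in>{1..G}. \<exists>k. i = cx g k) \<or> (\<exists>h\<in>{1..<G}. i = ct h))"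

definition comp :: "(nat \<Rightarrow> 'd::finite \<Rightarrow> 'r::finite) \<Rightarrow> real^'r \<Rightarrow> nat \<Rightarrow> real^'d" where
  "comp cx \<theta> g = (\<chi> k. \<theta> $ cx g k)"

definition tau :: "nat \<Rightarrow> (nat \<Rightarrow> 'r::finite) \<Rightarrow> real^'r \<Rightarrow> nat \<Rightarrow> real" where
  "tau G ct \<theta> g = (if g < G then \<theta> $ ct g else 1 - (\<Sum>h\<in>{1..<G}. \<theta> $ ct h))"

text \<open>Relabelling map P_sigma: components (xi_{sigma 1},...,xi_{sigma G}),
  proportions (tau_{sigma 1},...,tau_{sigma (G-1)}).\<close>
definition relabel :: "nat \<Rightarrow> (nat \<Rightarrow> 'd::finite \<Rightarrow> 'r::finite) \<Rightarrow> (nat \<Rightarrow> 'r) \<Rightarrow> (nat \<Rightarrow> nat)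
     \<Rightarrow> real^'r \<Rightarrow> real^'r" where
  "relabel G cx ct \<sigma> \<theta> = (\<chi> i.
     if (\<exists>g\<in>{1..G}. \<exists>k. i = cx g k)
     then (case (THE (g,k). g \<in> {1..G} \<and> i = cx g k) of (g,k) \<Rightarrow> \<theta> $ cx (\<sigma> g) k)
     else tau G ct \<theta> (\<sigma> (THE h. h \<in> {1..<G} \<and> i = ct h)))"

definition sortperm :: "nat \<Rightarrow> (real^'d::finite \<Rightarrow> real) \<Rightarrow> (nat \<Rightarrow> 'd \<Rightarrow> 'r::finite) \<Rightarrow> real^'r \<Rightarrow> (nat \<Rightarrow> nat)" where
  "sortperm G W cx \<theta> = (THE \<rho>. \<rho> permutes {1..G} \<and>
     (\<forall>g\<in>{1..G}. \<forall>h\<in>{1..G}. g < h \<longrightarrow>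
        W (comp cx \<theta> (\<rho> g)) < W (comp cx \<theta> (\<rho> h)) \<or>
        (W (comp cx \<theta> (\<rho> g)) = W (comp cx \<theta> (\<rho> h)) \<and> \<rho> g < \<rho> h)))"

definition psi :: "nat \<Rightarrow> (real^'d::finite \<Rightarrow> real) \<Rightarrow> (nat \<Rightarrow> 'd \<Rightarrow> 'r::finite) \<Rightarrow> (nat \<Rightarrow> 'r)
     \<Rightarrow> (nat \<Rightarrow> nat) \<Rightarrow> real^'r \<Rightarrow> real^'r" where
  "psi G W cx ct \<sigma> \<theta> = relabel G cx ct \<sigma> (relabel G cx ct (sortperm G W cx \<theta>) \<theta>)"

definition pos_def_mat :: "real^'n^'n \<Rightarrow> bool" where
  "pos_def_mat S \<longleftrightarrow> transpose S = S \<and> (\<forall>x. x \<noteq> 0 \<longrightarrow> x \<bullet> (S *v x) > 0)"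

definition ellipsoid :: "real^'r \<Rightarrow> real^'r^'r \<Rightarrow> real \<Rightarrow> (real^'r) set" where
  "ellipsoid th S c = {\<theta>. (\<theta> - th) \<bullet> (matrix_inv S *v (\<theta> - th)) < c\<^sup>2}"

definition Bset :: "real^'r \<Rightarrow> real^'r^'r \<Rightarrow> real \<Rightarrow> (real^'r \<Rightarrow> real) \<Rightarrow> (real^'r \<Rightarrow> real) \<Rightarrow> real \<Rightarrow> (real^'r) set" where
  "Bset th S c prior lik q = ellipsoid th S c \<inter> {\<theta>. prior \<theta> * lik \<theta> > q}"

text \<open>Delta matrix and the set Omega of permutations compatible with its topological order.
  Position of g in the sequence (sigma^-1 1, ..., sigma^-1 G) is sigma g.\<close>
definition Delta :: "(real^'d::finite \<Rightarrow> real) \<Rightarrow> (nat \<Rightarrow> 'd \<Rightarrow> 'r::finite) \<Rightarrow> (real^'r) set \<Rightarrow> nat \<Rightarrow> nat \<Rightarrow> bool" where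
  "Delta W cx E g1 g2 \<longleftrightarrow> (\<forall>\<theta>\<in>E. W (comp cx \<theta> g1) < W (comp cx \<theta> g2))"

definition Omega :: "nat \<Rightarrow> (real^'d::finite \<Rightarrow> real) \<Rightarrow> (nat \<Rightarrow> 'd \<Rightarrow> 'r::finite) \<Rightarrow> (real^'r) set \<Rightarrow> (nat \<Rightarrow> nat) set" where
  "Omega G W cx E = {\<sigma>. \<sigma> permutes {1..G} \<and>
     (\<forall>g1\<in>{1..G}. \<forall>g2\<in>{1..G}. Delta W cx E g1 g2 \<longrightarrow> \<sigma> g1 < \<sigma> g2)}"

end

theory Submission
  imports Defs
begin


lemma sort_ex1:
  fixes r :: "nat \<Rightarrow> nat \<Rightarrow> bool"
  assumes irr: "\<And>x. \<not> r x x" and tr: "\<And>x y z. r x y \<Longrightarrow> r y z \<Longrightarrow> r x z"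
    and tot: "\<And>x y. x \<in> {1..G} \<Longrightarrow> y \<in> {1..G} \<Longrightarrow> x \<noteq> y \<Longrightarrow> r x y \<or> r y x"
  shows "\<exists>!\<rho>. \<rho> permutes {1..G} \<and> (\<forall>g\<in>{1..G}. \<forall>h\<in>{1..G}. g<h \<longrightarrow> r (\<rho> g) (\<rho> h))"
proof -
  define pos where "pos h = (if h\<in>{1..G} then Suc (card {h'\<in>{1..G}. r h' h}) else h)" for h
  have posin: "pos h \<in> {1..G}" if "h \<in> {1..G}" for h
  proof -
    have "{h'\<in>{1..G}. r h' h} \<subseteq> {1..G} - {h}" using irr by auto
    hence "card {h'\<in>{1..G}. r h' h} \<le> card ({1..G} - {h})" by (intro card_mono) auto
    also have "\<dots> = G - 1" using that by simp
    finally show ?thesis using that unfolding pos_def by simp linarith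
  qed
  have poslt: "pos h1 < pos h2" if "h1 \<in> {1..G}" "h2 \<in> {1..G}" "r h1 h2" for h1 h2
  proof -
    have "{h'\<in>{1..G}. r h' h1} \<subset> {h'\<in>{1..G}. r h' h2}"
      using that irr tr[of _ h1 h2] by auto
    hence "card {h'\<in>{1..G}. r h' h1} < card {h'\<in>{1..G}. r h' h2}"
      by (intro psubset_card_mono) auto
    thus ?thesis using that by (simp add: pos_def)
  qed
  have posinj: "inj_on pos {1..G}"
  proof (rule inj_onI)
    fix x y assume xy: "x \<in> {1..G}" "y \<in> {1..G}" "pos x = pos y"
    show "x = y"
    proof (rule ccontr)
      assume "x \<noteq> y"
      hence "r x y \<or> r y x" using tot xy by auto
      thus False using poslt xy by (metis less_irrefl)
    qed
  qed
  have posperm: "pos permutes {1..G}"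
    by (rule inj_imp_permutes[OF posinj _ posin]) (auto simp: pos_def)
  have char: "\<rho> = inv pos" if rp: "\<rho> permutes {1..G}" and
     mono: "\<forall>g\<in>{1..G}. \<forall>h\<in>{1..G}. g<h \<longrightarrow> r (\<rho> g) (\<rho> h)" for \<rho>
  proof -
    have iff: "r (\<rho> b) (\<rho> a) \<longleftrightarrow> b < a" if "a \<in> {1..G}" "b \<in> {1..G}" for a b
      using mono that irr tr[of "\<rho> b" "\<rho> a" "\<rho> b"] by (metis linorder_neqE_nat)
    have pr: "pos (\<rho> a) = a" if a: "a \<in> {1..G}" for a
    proof -
      have "{h'\<in>{1..G}. r h' (\<rho> a)} = \<rho> ` {b\<in>{1..G}. b < a}"
      proof (rule set_eqI, rule iffI)
        fix x assume x: "x \<in> {h'\<in>{1..G}. r h' (\<rho> a)}"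
        have "inv \<rho> x \<in> {1..G}" using x permutes_in_image[OF permutes_inv[OF rp]] by auto
        moreover have "\<rho> (inv \<rho> x) = x" using permutes_inverses[OF rp] by simp
        ultimately show "x \<in> \<rho> ` {b\<in>{1..G}. b < a}" using x iff[OF a] by (metis (mono_tags, lifting) image_eqI mem_Collect_eq)
      next
        fix x assume "x \<in> \<rho> ` {b\<in>{1..G}. b < a}"
        then obtain b where "b \<in> {1..G}" "b < a" "x = \<rho> b" by auto
        thus "x \<in> {h'\<in>{1..G}. r h' (\<rho> a)}" using iff[OF a] permutes_in_image[OF rp] by auto
      qed
      hence "card {h'\<in>{1..G}. r h' (\<rho> a)} = card {b\<in>{1..G}. b < a}"
        using card_image[OF inj_on_subset[OF permutes_inj[OF rp]]] by simp
      also have "{b\<in>{1..G}. b < a} = {1..<a}" using a by auto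
      finally show ?thesis using a permutes_in_image[OF rp] by (simp add: pos_def)
    qed
    show ?thesis
    proof
      fix a show "\<rho> a = inv pos a"
      proof (cases "a \<in> {1..G}")
        case True thus ?thesis using pr permutes_inverses(2)[OF posperm] by metis
      next
        case False thus ?thesis using permutes_not_in[OF rp] permutes_not_in[OF permutes_inv[OF posperm]] by metis
      qed
    qed
  qed
  have ex: "inv pos permutes {1..G} \<and> (\<forall>g\<in>{1..G}. \<forall>h\<in>{1..G}. g<h \<longrightarrow> r (inv pos g) (inv pos h))"
  proof (intro conjI ballI impI)
    show "inv pos permutes {1..G}" by (rule permutes_inv[OF posperm])
    fix g h assume gh: "g \<in> {1..G}" "h \<in> {1..G}" "g < h"
    have ig: "inv pos g \<in> {1..G}" "inv pos h \<in> {1..G}"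
      using gh permutes_in_image[OF permutes_inv[OF posperm]] by auto
    have ne: "inv pos g \<noteq> inv pos h" using gh permutes_inverses(1)[OF posperm] by (metis less_irrefl)
    hence "r (inv pos g) (inv pos h) \<or> r (inv pos h) (inv pos g)" using tot ig by auto
    moreover have "\<not> r (inv pos h) (inv pos g)"
      using poslt[OF ig(2) ig(1)] gh permutes_inverses(1)[OF posperm] by (metis less_asym)
    ultimately show "r (inv pos g) (inv pos h)" by auto
  qed
  show ?thesis
  proof (rule ex1I[of _ "inv pos"])
    fix \<rho> assume "\<rho> permutes {1..G} \<and> (\<forall>g\<in>{1..G}. \<forall>h\<in>{1..G}. g<h \<longrightarrow> r (\<rho> g) (\<rho> h))"
    thus "\<rho> = inv pos" using char by simp
  qed (rule ex)
qed



lemma relabel_cx: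
  assumes L: "layout G cx ct" and g: "g \<in> {1..G}"
  shows "relabel G cx ct \<sigma> \<theta> $ cx g k = \<theta> $ cx (\<sigma> g) k"
proof -
  have inj: "inj_on (\<lambda>(g,k). cx g k) ({1..G} \<times> UNIV)" using L by (simp add: layout_def)
  have "(THE (g',k'). g' \<in> {1..G} \<and> cx g k = cx g' k') = (g,k)"
  proof (rule the_equality)
    show "case (g, k) of (g', k') \<Rightarrow> g' \<in> {1..G} \<and> cx g k = cx g' k'" using g by simp
  next
    fix p assume "case p of (g', k') \<Rightarrow> g' \<in> {1..G} \<and> cx g k = cx g' k'"
    thus "p = (g,k)"
    proof (cases p)
      case (Pair a b)
      assume "case p of (g', k') \<Rightarrow> g' \<in> {1..G} \<and> cx g k = cx g' k'"
      hence "a \<in> {1..G}" "cx g k = cx a b" using Pair by auto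
      hence "(g,k) = (a,b)" using inj_onD[OF inj, of "(g,k)" "(a,b)"] g by auto
      thus ?thesis using Pair by simp
    qed
  qed
  thus ?thesis using g unfolding relabel_def by auto
qed

lemma relabel_ct:
  assumes L: "layout G cx ct" and h: "h \<in> {1..<G}"
  shows "relabel G cx ct \<sigma> \<theta> $ ct h = tau G ct \<theta> (\<sigma> h)"
proof -
  have inj: "inj_on ct {1..<G}" and dis: "\<forall>g\<in>{1..G}. \<forall>k. \<forall>h\<in>{1..<G}. cx g k \<noteq> ct h"
    using L by (simp_all add: layout_def)
  have "(THE h'. h' \<in> {1..<G} \<and> ct h = ct h') = h"
    using inj h by (intro the_equality) (auto dest: inj_onD)
  moreover have "\<not> (\<exists>g\<in>{1..G}. \<exists>k. ct h = cx g k)" using dis h by metis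
  ultimately show ?thesis unfolding relabel_def by simp
qed

lemma tau_sum:
  assumes "G \<ge> 1"
  shows "(\<Sum>g\<in>{1..G}. tau G ct \<theta> g) = 1"
proof -
  have "{1..G} = insert G {1..<G}" using assms by auto
  hence "(\<Sum>g\<in>{1..G}. tau G ct \<theta> g) = tau G ct \<theta> G + (\<Sum>g\<in>{1..<G}. tau G ct \<theta> g)" by simp
  also have "(\<Sum>g\<in>{1..<G}. tau G ct \<theta> g) = (\<Sum>g\<in>{1..<G}. \<theta> $ ct g)"
    by (rule sum.cong) (auto simp: tau_def)
  finally show ?thesis by (simp add: tau_def)
qed

lemma tau_relabel:
  assumes L: "layout G cx ct" and G: "G \<ge> 1" and s: "\<sigma> permutes {1..G}" and g: "g \<in> {1..G}"
  shows "tau G ct (relabel G cx ct \<sigma> \<theta>) g = tau G ct \<theta> (\<sigma> g)"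
proof (cases "g < G")
  case True thus ?thesis using relabel_ct[OF L] g by (simp add: tau_def)
next
  case False
  hence gG: "g = G" using g by auto
  have "(\<Sum>h\<in>{1..G}. tau G ct \<theta> (\<sigma> h)) = 1"
    using sum.permute[OF s, of "tau G ct \<theta>"] tau_sum[OF G, of ct \<theta>] by (simp add: comp_def)
  moreover have "{1..G} = insert G {1..<G}" using G by auto
  ultimately have "tau G ct \<theta> (\<sigma> G) = 1 - (\<Sum>h\<in>{1..<G}. tau G ct \<theta> (\<sigma> h))" by simp
  moreover have "(\<Sum>h\<in>{1..<G}. relabel G cx ct \<sigma> \<theta> $ ct h) = (\<Sum>h\<in>{1..<G}. tau G ct \<theta> (\<sigma> h))"
    by (rule sum.cong) (auto simp: relabel_ct[OF L])
  ultimately show ?thesis using gG by (simp add: tau_def)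
qed

lemma relabel_comp:
  assumes L: "layout G cx ct" and G: "G \<ge> 1" and s: "\<sigma> permutes {1..G}" and r: "\<rho> permutes {1..G}"
  shows "relabel G cx ct \<sigma> (relabel G cx ct \<rho> \<theta>) = relabel G cx ct (\<rho> \<circ> \<sigma>) \<theta>"
proof (rule vec_eq_iff[THEN iffD2], rule allI)
  fix i
  have "(\<exists>g\<in>{1..G}. \<exists>k. i = cx g k) \<or> (\<exists>h\<in>{1..<G}. i = ct h)" using L by (simp add: layout_def)
  thus "relabel G cx ct \<sigma> (relabel G cx ct \<rho> \<theta>) $ i = relabel G cx ct (\<rho> \<circ> \<sigma>) \<theta> $ i"
  proof
    assume "\<exists>g\<in>{1..G}. \<exists>k. i = cx g k"
    then obtain g k where gk: "g \<in> {1..G}" "i = cx g k" by blast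
    have "\<sigma> g \<in> {1..G}" using gk permutes_in_image[OF s] by simp
    thus ?thesis using gk relabel_cx[OF L] by simp
  next
    assume "\<exists>h\<in>{1..<G}. i = ct h"
    then obtain h where h: "h \<in> {1..<G}" "i = ct h" by blast
    have "\<sigma> h \<in> {1..G}" using h permutes_in_image[OF s] by simp
    thus ?thesis using h relabel_ct[OF L] tau_relabel[OF L G r] by simp
  qed
qed

lemma comp_relabel:
  assumes L: "layout G cx ct" and g: "g \<in> {1..G}"
  shows "comp cx (relabel G cx ct \<sigma> \<theta>) g = comp cx \<theta> (\<sigma> g)"
  using relabel_cx[OF L g] by (simp add: comp_def)

lemma sortperm_props:
  fixes G :: nat and W :: "real^'d::finite \<Rightarrow> real" and cx :: "nat \<Rightarrow> 'd \<Rightarrow> 'r::finite" and \<theta> :: "real^'r"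
  defines "\<rho> \<equiv> sortperm G W cx \<theta>"
  shows "\<rho> permutes {1..G} \<and> (\<forall>g\<in>{1..G}. \<forall>h\<in>{1..G}. g < h \<longrightarrow>
        W (comp cx \<theta> (\<rho> g)) \<le> W (comp cx \<theta> (\<rho> h)))"
proof -
  define r where "r a b = (W (comp cx \<theta> a) < W (comp cx \<theta> b) \<or>
        (W (comp cx \<theta> a) = W (comp cx \<theta> b) \<and> a < b))" for a b
  have ex: "\<exists>!\<rho>. \<rho> permutes {1..G} \<and> (\<forall>g\<in>{1..G}. \<forall>h\<in>{1..G}. g<h \<longrightarrow> r (\<rho> g) (\<rho> h))"
    by (rule sort_ex1) (auto simp: r_def)
  have "\<rho> permutes {1..G} \<and> (\<forall>g\<in>{1..G}. \<forall>h\<in>{1..G}. g<h \<longrightarrow> r (\<rho> g) (\<rho> h))"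
    unfolding \<rho>_def sortperm_def using theI'[OF ex] by (simp add: r_def)
  thus ?thesis unfolding r_def by (metis atLeastAtMost_iff less_imp_le order_refl)
qed



lemma omega_mem:
  assumes L: "layout G cx ct" and s: "\<sigma> permutes {1..G}"
    and inE: "relabel G cx ct (sortperm G W cx \<theta> \<circ> \<sigma>) \<theta> \<in> E"
  shows "\<sigma> \<in> Omega G W cx E"
proof -
  define \<rho> where "\<rho> = sortperm G W cx \<theta>"
  have r: "\<rho> permutes {1..G}" and mono: "\<And>g h. g\<in>{1..G} \<Longrightarrow> h\<in>{1..G} \<Longrightarrow> g < h \<Longrightarrow>
        W (comp cx \<theta> (\<rho> g)) \<le> W (comp cx \<theta> (\<rho> h))"
    using sortperm_props[of G W cx \<theta>] unfolding \<rho>_def by auto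
  have "\<sigma> g1 < \<sigma> g2" if g: "g1 \<in> {1..G}" "g2 \<in> {1..G}" and D: "Delta W cx E g1 g2" for g1 g2
  proof -
    have "W (comp cx (relabel G cx ct (\<rho> \<circ> \<sigma>) \<theta>) g1) < W (comp cx (relabel G cx ct (\<rho> \<circ> \<sigma>) \<theta>) g2)"
      using D inE unfolding Delta_def \<rho>_def by blast
    hence lt: "W (comp cx \<theta> (\<rho> (\<sigma> g1))) < W (comp cx \<theta> (\<rho> (\<sigma> g2)))"
      using comp_relabel[OF L g(1)] comp_relabel[OF L g(2)] by simp
    have sg: "\<sigma> g1 \<in> {1..G}" "\<sigma> g2 \<in> {1..G}" using g permutes_in_image[OF s] by auto
    show ?thesis
    proof (rule ccontr)
      assume "\<not> \<sigma> g1 < \<sigma> g2"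
      hence "\<sigma> g1 = \<sigma> g2 \<or> \<sigma> g2 < \<sigma> g1" by auto
      thus False
      proof
        assume "\<sigma> g1 = \<sigma> g2" thus False using lt by simp
      next
        assume "\<sigma> g2 < \<sigma> g1" thus False using mono[OF sg(2) sg(1)] lt by simp
      qed
    qed
  qed
  thus ?thesis using s unfolding Omega_def by auto
qed

lemma key_sum:
  fixes f :: "nat \<Rightarrow> real" and smp :: "nat \<Rightarrow> real^'r::finite" and W :: "real^'d::finite \<Rightarrow> real"
  assumes L: "layout G cx ct" and G: "G \<ge> 1" and BE: "B \<subseteq> E" and finI: "finite I"
  shows "(\<Sum>\<sigma>\<in>{\<sigma>. \<sigma> permutes {1..G}}. \<Sum>t\<in>{t\<in>I. relabel G cx ct \<sigma> (smp t) \<in> B}. f t)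
       = (\<Sum>\<sigma>\<in>Omega G W cx E. \<Sum>t\<in>{t\<in>I. psi G W cx ct \<sigma> (smp t) \<in> B}. f t)"
proof -
  define P where "P = {\<sigma>. \<sigma> permutes {1..G}}"
  define \<rho> where "\<rho> t = sortperm G W cx (smp t)" for t
  have rp: "\<rho> t permutes {1..G}" for t using sortperm_props[of G W cx "smp t"] unfolding \<rho>_def by auto
  have OP: "Omega G W cx E \<subseteq> P" unfolding Omega_def P_def by auto
  have finP: "finite P" unfolding P_def by (rule finite_permutations) simp
  have psi_eq: "psi G W cx ct \<sigma> (smp t) = relabel G cx ct (\<rho> t \<circ> \<sigma>) (smp t)" if "\<sigma> \<in> P" for \<sigma> t
    using relabel_comp[OF L G _ rp] that unfolding psi_def \<rho>_def P_def by auto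
  define S where "S = Sigma (Omega G W cx E) (\<lambda>\<sigma>. {t\<in>I. psi G W cx ct \<sigma> (smp t) \<in> B})"
  define T where "T = Sigma P (\<lambda>\<sigma>. {t\<in>I. relabel G cx ct \<sigma> (smp t) \<in> B})"
  define h where "h = (\<lambda>(\<sigma>::nat\<Rightarrow>nat, t::nat). (\<rho> t \<circ> \<sigma>, t))"
  define h' where "h' = (\<lambda>(\<sigma>::nat\<Rightarrow>nat, t::nat). (inv (\<rho> t) \<circ> \<sigma>, t))"
  have bij: "bij_betw h S T"
  proof (rule bij_betw_byWitness[where f'=h'])
    show "\<forall>a\<in>S. h' (h a) = a"
      by (auto simp: h_def h'_def fun_eq_iff permutes_inverses[OF rp])
    show "\<forall>a\<in>T. h (h' a) = a"
      by (auto simp: h_def h'_def fun_eq_iff permutes_inverses[OF rp])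
    show "h ` S \<subseteq> T"
    proof
      fix x assume "x \<in> h ` S"
      then obtain \<sigma> t where st: "\<sigma> \<in> Omega G W cx E" "t \<in> I" "psi G W cx ct \<sigma> (smp t) \<in> B" "x = (\<rho> t \<circ> \<sigma>, t)"
        unfolding S_def h_def by auto
      have "\<sigma> \<in> P" using st OP by auto
      hence "\<rho> t \<circ> \<sigma> \<in> P" using rp permutes_compose unfolding P_def by blast
      thus "x \<in> T" using st psi_eq[OF \<open>\<sigma> \<in> P\<close>] unfolding T_def by auto
    qed
    show "h' ` T \<subseteq> S"
    proof
      fix x assume "x \<in> h' ` T"
      then obtain \<tau> t where st: "\<tau> \<in> P" "t \<in> I" "relabel G cx ct \<tau> (smp t) \<in> B" "x = (inv (\<rho> t) \<circ> \<tau>, t)"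
        unfolding T_def h'_def by auto
      define \<sigma> where "\<sigma> = inv (\<rho> t) \<circ> \<tau>"
      have sP: "\<sigma> permutes {1..G}" using st permutes_compose[OF _ permutes_inv[OF rp]] unfolding \<sigma>_def P_def by auto
      have rs: "\<rho> t \<circ> \<sigma> = \<tau>" unfolding \<sigma>_def by (simp add: fun_eq_iff permutes_inverses[OF rp])
      have "\<sigma> \<in> Omega G W cx E"
        using omega_mem[OF L sP, of W "smp t" E] rs st BE unfolding \<rho>_def by auto
      moreover have "psi G W cx ct \<sigma> (smp t) \<in> B" using psi_eq[of \<sigma> t] sP rs st unfolding P_def by auto
      ultimately show "x \<in> S" using st unfolding S_def \<sigma>_def by auto
    qed
  qed
  have "(\<Sum>\<sigma>\<in>P. \<Sum>t\<in>{t\<in>I. relabel G cx ct \<sigma> (smp t) \<in> B}. f t) = (\<Sum>(\<sigma>,t)\<in>T. f t)"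
    unfolding T_def using finP finI by (intro sum.Sigma) auto
  also have "\<dots> = (\<Sum>x\<in>S. (\<lambda>(\<sigma>,t). f t) (h x))"
    using sum.reindex_bij_betw[OF bij, of "\<lambda>(\<sigma>,t). f t"] by simp
  also have "\<dots> = (\<Sum>(\<sigma>,t)\<in>S. f t)" by (intro sum.cong) (auto simp: h_def)
  also have "\<dots> = (\<Sum>\<sigma>\<in>Omega G W cx E. \<Sum>t\<in>{t\<in>I. psi G W cx ct \<sigma> (smp t) \<in> B}. f t)"
    unfolding S_def using finP finI OP by (intro sum.Sigma[symmetric]) (auto intro: finite_subset)
  finally show ?thesis unfolding P_def .
qed

theorem theorem4:
  fixes G T :: nat
    and W :: "real^'d::finite \<Rightarrow> real"
    and cx :: "nat \<Rightarrow> 'd \<Rightarrow> 'r::finite" and ct :: "nat \<Rightarrow> 'r"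
    and prior lik :: "real^'r \<Rightarrow> real"
    and th :: "real^'r" and S :: "real^'r^'r" and c q :: real
    and smp :: "nat \<Rightarrow> real^'r"
  defines "E \<equiv> ellipsoid th S c"
    and "B \<equiv> Bset th S c prior lik q"
  assumes "G \<ge> 1" and "layout G cx ct"
    and "W \<in> borel_measurable borel"
    and "pos_def_mat S" and "c > 0" and "q > 0"
    and "0 < emeasure lborel B" and "emeasure lborel B < \<infinity>"
    and "even T"
  shows "1 / fact G * (\<Sum>\<sigma>\<in>{\<sigma>. \<sigma> permutes {1..G}}. 1 / (real T / 2) *
           (\<Sum>t\<in>{t\<in>{T div 2 + 1..T}. relabel G cx ct \<sigma> (smp t) \<in> B}.
              (1 / measure lborel B) / (prior (smp t) * lik (smp t))))
       = 1 / fact G * (\<Sum>\<sigma>\<in>Omega G W cx E. 1 / (real T / 2) *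
           (\<Sum>t\<in>{t\<in>{T div 2 + 1..T}. psi G W cx ct \<sigma> (smp t) \<in> B}.
              (1 / measure lborel B) / (prior (smp t) * lik (smp t))))"
proof -
  have BE: "B \<subseteq> E" by (auto simp: B_def E_def Bset_def)
  have key: "(\<Sum>\<sigma>\<in>{\<sigma>. \<sigma> permutes {1..G}}. \<Sum>t\<in>{t\<in>{T div 2 + 1..T}. relabel G cx ct \<sigma> (smp t) \<in> B}.
              (1 / measure lborel B) / (prior (smp t) * lik (smp t)))
       = (\<Sum>\<sigma>\<in>Omega G W cx E. \<Sum>t\<in>{t\<in>{T div 2 + 1..T}. psi G W cx ct \<sigma> (smp t) \<in> B}.
              (1 / measure lborel B) / (prior (smp t) * lik (smp t)))"
    by (rule key_sum[OF \<open>layout G cx ct\<close> \<open>G \<ge> 1\<close> BE]) simp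
  show ?thesis unfolding sum_distrib_left[symmetric] using key by simp
qed

end
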